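(* Let $p\ge 1711$ be a prime such that $-1$ is a quadratic residue modulo $p$ and $2,3$ are quadratic non-residues modulo $p$. Let $R'=R\setminus\{\tfrac{p+3}{2},\tfrac{p-3}{2}\}$ (elements of $\mathbb{F}_p$, i.e. $R'=R\setminus\{3/2,-3/2\}$). Let $\vec D$ be the digraph with vertex set $R'$ whose edges are: for every triple $x,y,z\in R'$ with $2x=y+z\neq 3$, the edges $(x,y)$ and $(x,z)$; and for every pair $y\neq z$ in $R'$ with $y+z=3$, the edges $(1,y)$ and $(1,z)$. Then $\vec D$ is strongly connected. Equivalently, the system of inequalities in variables $(x_a)_{a\in R'}$ $$2x_a\le x_b+x_c\ \ (a,b,c\in R',\ 2a=b+c\neq3),\qquad 3x_1\le x_b+x_c\ \ (b,c\in R',\ b+c=3),\qquad x_a>0\ \ (a\in R')$$ is strongly connected in the sense that its associated digraph (edges from the left-hand index to each right-hand index of every inequality) is strongly connected.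
   Context: $R$ denotes the set of nonzero quadratic residues in $\mathbb{F}_p$ (note $1\in R'$). All arithmetic is in $\mathbb{F}_p$. *)

theory Defs
  imports "HOL-Number_Theory.Number_Theory"
begin

text \<open>Elements of F_p are represented by their canonical representatives in {0..p-1}.\<close>

definition QRset :: "int \<Rightarrow> int set" where
  "QRset p = {a \<in> {1..p - 1}. QuadRes p a}"

definition Rprime :: "int \<Rightarrow> int set" where
  "Rprime p = QRset p - {(p + 3) div 2, (p - 3) div 2}"

definition D_edges :: "int \<Rightarrow> (int \<times> int) set" where
  "D_edges p =
     {(x, y). x \<in> Rprime p \<and> y \<in> Rprime p \<and>
        (\<exists>z \<in> Rprime p. [2 * x = y + z] (mod p) \<and> \<not> [y + z = 3] (mod p))}
   \<union> {(x, y). x = 1 \<and> y \<in> Rprime p \<and>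
        (\<exists>z \<in> Rprime p. z \<noteq> y \<and> [y + z = 3] (mod p))}"

end

theory Submission
  imports Defs
begin


locale pset =
  fixes p :: int
  assumes pp: "prime p" and p5: "p > 3"
begin

lemma p_pos: "p > 0" using p5 by simp

lemma leg_cong: "[x = y] (mod p) \<Longrightarrow> Legendre x p = Legendre y p"
proof -
  assume h: "[x = y] (mod p)"
  have "QuadRes p x = QuadRes p y" unfolding QuadRes_def
    using h cong_sym cong_trans by blast
  moreover have "[x = 0] (mod p) = [y = 0] (mod p)" using h cong_sym cong_trans by blast
  ultimately show ?thesis unfolding Legendre_def by simp
qed

lemma leg_mod: "Legendre (x mod p) p = Legendre x p"
  by (rule leg_cong) (simp add: cong_def)

lemma leg_vals: "Legendre x p = 1 \<or> Legendre x p = 0 \<or> Legendre x p = -1"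
  unfolding Legendre_def by auto

lemma leg_zero: "Legendre x p = 0 \<longleftrightarrow> p dvd x"
proof -
  have "Legendre x p = 0 \<longleftrightarrow> [x = 0] (mod p)" by (simp add: Legendre_def)
  then show ?thesis by (simp add: cong_0_iff)
qed

lemma euler: "[Legendre x p = x ^ nat ((p - 1) div 2)] (mod p)"
proof -
  define n where "n = nat p"
  have pn: "p = int n" using p5 n_def by simp
  have "prime n" using pp pn by simp
  moreover have "2 < n" using p5 pn by simp
  ultimately have "[Legendre x (int n) = x ^ ((n - 1) div 2)] (mod int n)"
    by (rule euler_criterion)
  moreover have "(n - 1) div 2 = nat ((p - 1) div 2)" using p5 pn by (simp add: nat_div_distrib nat_diff_distrib)
  ultimately show ?thesis using pn by simp
qed

lemma leg_mult: "Legendre (x*y) p = Legendre x p * Legendre y p"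
proof -
  have c1: "[Legendre (x*y) p = (x*y) ^ nat ((p - 1) div 2)] (mod p)" by (rule euler)
  have c2: "[Legendre x p * Legendre y p = x ^ nat ((p - 1) div 2) * y ^ nat ((p - 1) div 2)] (mod p)"
    using cong_mult[OF euler[of x] euler[of y]] .
  have c: "[Legendre (x*y) p = Legendre x p * Legendre y p] (mod p)"
  proof -
    have e: "(x*y) ^ nat ((p - 1) div 2) = x ^ nat ((p - 1) div 2) * y ^ nat ((p - 1) div 2)"
      by (rule power_mult_distrib)
    show ?thesis using c1 c2 unfolding e using cong_sym cong_trans by blast
  qed
  then have d: "p dvd Legendre (x*y) p - Legendre x p * Legendre y p"
    using c by (simp only: cong_iff_dvd_diff)
  have "\<bar>Legendre (x*y) p - Legendre x p * Legendre y p\<bar> \<le> 2"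
    using leg_vals[of "x*y"] leg_vals[of x] leg_vals[of y] by auto
  then have lt: "\<bar>Legendre (x*y) p - Legendre x p * Legendre y p\<bar> < p" using p5 by linarith
  show ?thesis
  proof (rule ccontr)
    assume "Legendre (x*y) p \<noteq> Legendre x p * Legendre y p"
    then have "Legendre (x*y) p - Legendre x p * Legendre y p \<noteq> 0" by simp
    then have "p \<le> \<bar>Legendre (x*y) p - Legendre x p * Legendre y p\<bar>"
      using dvd_imp_le_int[OF _ d] p5 by fastforce
    with lt show False by simp
  qed
qed

lemma leg_sq: "\<not> p dvd y \<Longrightarrow> Legendre (y*y*x) p = Legendre x p"
proof -
  assume "\<not> p dvd y"
  then have "Legendre y p \<noteq> 0" using leg_zero by simp
  then have "Legendre y p * Legendre y p = 1" using leg_vals[of y] by auto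
  then show ?thesis by (simp add: leg_mult)
qed

lemma S_mod: "x mod p \<in> {0..<p}" using p_pos by simp

lemma notdvd_small: "0 < k \<Longrightarrow> k < p \<Longrightarrow> \<not> p dvd k"
  using zdvd_not_zless by blast

lemma mod_eq_in: "x \<in> {0..<p} \<Longrightarrow> x mod p = x" by simp

lemma aff_inj: assumes a: "\<not> p dvd a" shows "inj_on (\<lambda>x. (a*x+b) mod p) {0..<p}"
proof (rule inj_onI)
  fix x y assume x: "x \<in> {0..<p}" and y: "y \<in> {0..<p}" and eq: "(a*x+b) mod p = (a*y+b) mod p"
  have "[a*x + b = a*y + b] (mod p)" using eq by (simp add: cong_def)
  then have "[a*x = a*y] (mod p)" by (simp only: cong_add_rcancel)
  moreover have "coprime a p" using prime_imp_coprime[OF pp a] by (simp add: coprime_commute)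
  ultimately have "[x = y] (mod p)" using cong_mult_lcancel by blast
  then have "x mod p = y mod p" by (simp add: cong_def)
  then show "x = y" using x y by simp
qed

lemma aff_bij: assumes "\<not> p dvd a" shows "bij_betw (\<lambda>x. (a*x+b) mod p) {0..<p} {0..<p}"
proof -
  have "(\<lambda>x. (a*x+b) mod p) ` {0..<p} \<subseteq> {0..<p}" using S_mod by auto
  moreover have "inj_on (\<lambda>x. (a*x+b) mod p) {0..<p}" by (rule aff_inj[OF assms])
  ultimately show ?thesis unfolding bij_betw_def using endo_inj_surj[of "{0..<p}"] by simp
qed

lemma sum_aff: assumes "\<not> p dvd a"
  shows "(\<Sum>x\<in>{0..<p}. g ((a*x+b) mod p)) = (\<Sum>x\<in>{0..<p}. g x)"
  by (rule sum.reindex_bij_betw[OF aff_bij[OF assms]])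

lemma leg_one: "Legendre 1 p = 1"
proof -
  have "QuadRes p 1" unfolding QuadRes_def by (rule exI[of _ 1]) simp
  moreover have "\<not> [1 = 0] (mod p)" using notdvd_small[of 1] p5 by (simp add: cong_0_iff)
  ultimately show ?thesis unfolding Legendre_def by simp
qed

lemma card_S: "card {0..<p} = nat p" by simp

lemma inv_ex: assumes y: "y \<in> {1..<p}" shows "\<exists>z. z \<in> {1..<p} \<and> [y*z = 1] (mod p)"
proof -
  have "\<not> p dvd y" using notdvd_small y by auto
  then have "coprime p y" by (rule prime_imp_coprime[OF pp])
  then have "coprime y p" using coprime_commute[THEN iffD1] by blast
  then obtain x where x: "[y*x = 1] (mod p)" using cong_solve_coprime_int by blast
  have c: "[y*(x mod p) = 1] (mod p)"
    using x by (metis cong_def mod_mult_right_eq)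
  have "x mod p \<noteq> 0"
  proof
    assume "x mod p = 0"
    then have "[0 = 1] (mod p)" using c by simp
    then have "p dvd 1" using cong_sym cong_0_iff by blast
    then show False using p5 by simp
  qed
  then have "x mod p \<in> {1..<p}" using S_mod[of x] by auto
  with c show ?thesis by blast
qed

definition minv :: "int \<Rightarrow> int" where "minv y = (SOME z. z \<in> {1..<p} \<and> [y*z = 1] (mod p))"

lemma inv_prop: "y \<in> {1..<p} \<Longrightarrow> minv y \<in> {1..<p} \<and> [y * minv y = 1] (mod p)"
proof -
  assume y: "y \<in> {1..<p}"
  show ?thesis unfolding minv_def by (rule someI_ex[OF inv_ex[OF y]])
qed

lemma inv_bij: "bij_betw minv {1..<p} {1..<p}"
proof -
  have im: "minv ` {1..<p} \<subseteq> {1..<p}" using inv_prop by auto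
  have "inj_on minv {1..<p}"
  proof (rule inj_onI)
    fix y y' assume y: "y \<in> {1..<p}" and y': "y' \<in> {1..<p}" and e: "minv y = minv y'"
    have a: "[y * minv y = 1] (mod p)" using inv_prop[OF y] by blast
    have b: "[y' * minv y = 1] (mod p)" using inv_prop[OF y'] e by simp
    have "[y * (y' * minv y) = y * 1] (mod p)" using b cong_scalar_left by blast
    moreover have "[y' * (y * minv y) = y' * 1] (mod p)" using a cong_scalar_left by blast
    moreover have "y * (y' * minv y) = y' * (y * minv y)" by (simp add: algebra_simps)
    ultimately have "[y * 1 = y' * 1] (mod p)" using cong_sym cong_trans by metis
    then have "[y = y'] (mod p)" by simp
    then show "y = y'" using y y' by (simp add: cong_def)
  qed
  then show ?thesis unfolding bij_betw_def using im endo_inj_surj[of "{1..<p}"] by simp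
qed

end

locale pset2 = pset +
  assumes m1: "QuadRes p (-1)" and n2: "\<not> QuadRes p 2"
begin

lemma leg_m1: "Legendre (-1) p = 1"
proof -
  have "\<not> [-1 = 0] (mod p)" using notdvd_small[of 1] p5 by (simp add: cong_0_iff)
  then show ?thesis using m1 unfolding Legendre_def by simp
qed

lemma leg_2: "Legendre 2 p = -1"
proof -
  have "\<not> [2 = 0] (mod p)" using notdvd_small[of 2] p5 by (simp add: cong_0_iff)
  then show ?thesis using n2 unfolding Legendre_def by simp
qed

lemma leg_neg: "Legendre (-x) p = Legendre x p"
  using leg_mult[of "-1" x] leg_m1 by simp

lemma leg_sum0: "(\<Sum>x\<in>{0..<p}. Legendre x p) = 0"
proof -
  have "\<not> p dvd 2" using notdvd_small[of 2] p5 by simp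
  then have "(\<Sum>x\<in>{0..<p}. Legendre x p) = (\<Sum>x\<in>{0..<p}. Legendre ((2*x+0) mod p) p)"
    using sum_aff[of 2 "\<lambda>x. Legendre x p" 0] by simp
  also have "\<dots> = (\<Sum>x\<in>{0..<p}. - Legendre x p)"
    by (rule sum.cong) (auto simp: leg_mod leg_mult leg_2)
  also have "\<dots> = - (\<Sum>x\<in>{0..<p}. Legendre x p)" by (simp add: sum_negf)
  finally show ?thesis by simp
qed

lemma leg_sum_aff: assumes "\<not> p dvd a" shows "(\<Sum>x\<in>{0..<p}. Legendre (a*x+b) p) = 0"
proof -
  have "(\<Sum>x\<in>{0..<p}. Legendre (a*x+b) p) = (\<Sum>x\<in>{0..<p}. Legendre ((a*x+b) mod p) p)"
    by (simp add: leg_mod)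
  also have "\<dots> = 0" using sum_aff[OF assms, of "\<lambda>x. Legendre x p" b] leg_sum0 by simp
  finally show ?thesis .
qed

lemma sum_quad0: assumes d: "\<not> p dvd \<delta>" shows "(\<Sum>y\<in>{0..<p}. Legendre (y*(y - \<delta>)) p) = -1"
proof -
  have S: "{0..<p} = insert 0 {1..<p}" using p_pos by auto
  have "(\<Sum>y\<in>{0..<p}. Legendre (y*(y - \<delta>)) p) = (\<Sum>y\<in>{1..<p}. Legendre (y*(y - \<delta>)) p)"
    unfolding S by (simp add: Legendre_def)
  also have "\<dots> = (\<Sum>y\<in>{1..<p}. Legendre (1 - \<delta> * minv y) p)"
  proof (rule sum.cong[OF refl])
    fix y assume y: "y \<in> {1..<p}"
    define z where "z = minv y"
    have z: "z \<in> {1..<p}" "[y*z = 1] (mod p)" using inv_prop[OF y] z_def by auto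
    have nz: "\<not> p dvd z" using notdvd_small z(1) by auto
    have "p dvd (z*y - 1)" using z(2) by (simp add: cong_iff_dvd_diff mult.commute cong_sym_eq)
    then have "p dvd (z*y - 1) * (z*y + 1 - \<delta>*z)" by simp
    moreover have "(z*y - 1) * (z*y + 1 - \<delta>*z) = z*z*(y*(y - \<delta>)) - (1 - \<delta>*z)" by (simp add: algebra_simps)
    ultimately have "[z*z*(y*(y - \<delta>)) = 1 - \<delta>*z] (mod p)" by (simp add: cong_iff_dvd_diff)
    then have "Legendre (z*z*(y*(y - \<delta>))) p = Legendre (1 - \<delta>*z) p" by (rule leg_cong)
    then show "Legendre (y*(y - \<delta>)) p = Legendre (1 - \<delta> * minv y) p"
      using leg_sq[OF nz] z_def by simp
  qed
  also have "\<dots> = (\<Sum>z\<in>{1..<p}. Legendre (1 - \<delta> * z) p)"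
    by (rule sum.reindex_bij_betw[OF inv_bij, of "\<lambda>z. Legendre (1 - \<delta> * z) p"])
  also have "\<dots> = (\<Sum>z\<in>{0..<p}. Legendre ((-\<delta>) * z + 1) p) - Legendre 1 p"
    unfolding S by (simp add: algebra_simps)
  also have "\<dots> = -1" using leg_sum_aff[of "-\<delta>" 1] d leg_one by simp
  finally show ?thesis .
qed

lemma dvd_mod_diff: "p dvd (a mod p - a)"
proof -
  have "(a mod p) mod p = a mod p" by simp
  then show ?thesis by (simp only: mod_eq_dvd_iff)
qed

lemma leg_sq1: "\<not> p dvd x \<Longrightarrow> Legendre x p * Legendre x p = 1"
  using leg_zero[of x] leg_vals[of x] by auto

lemma sq_weight:
  "(\<Sum>x\<in>{0..<p}. (Legendre (x - \<alpha>) p * Legendre (x - \<alpha>) p) * g x) = (\<Sum>x\<in>{0..<p}. g x) - g (\<alpha> mod p)"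
proof -
  define a where "a = \<alpha> mod p"
  have aS: "a \<in> {0..<p}" using S_mod a_def by simp
  have "(\<Sum>x\<in>{0..<p}. (Legendre (x - \<alpha>) p * Legendre (x - \<alpha>) p) * g x)
     = (Legendre (a - \<alpha>) p * Legendre (a - \<alpha>) p) * g a + (\<Sum>x\<in>{0..<p} - {a}. (Legendre (x - \<alpha>) p * Legendre (x - \<alpha>) p) * g x)"
    by (rule sum.remove[OF _ aS]) simp
  also have "Legendre (a - \<alpha>) p = 0" using dvd_mod_diff[of \<alpha>] a_def leg_zero by simp
  also have "(\<Sum>x\<in>{0..<p} - {a}. (Legendre (x - \<alpha>) p * Legendre (x - \<alpha>) p) * g x) = (\<Sum>x\<in>{0..<p} - {a}. g x)"
  proof (rule sum.cong[OF refl])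
    fix x assume x: "x \<in> {0..<p} - {a}"
    have "\<not> p dvd (x - \<alpha>)"
    proof
      assume "p dvd (x - \<alpha>)"
      then have "x mod p = \<alpha> mod p" by (simp add: mod_eq_dvd_iff)
      then show False using x a_def by simp
    qed
    then show "(Legendre (x - \<alpha>) p * Legendre (x - \<alpha>) p) * g x = g x" using leg_sq1 by simp
  qed
  also have "\<dots> = (\<Sum>x\<in>{0..<p}. g x) - g a" using sum_diff1[of "{0..<p}" g a] aS by simp
  finally show ?thesis using a_def by simp
qed

lemma sum_one: "(\<Sum>x\<in>{0..<p}. (1::int)) = p" using p_pos by simp

lemma sum_quad: assumes "\<not> p dvd (\<alpha> - \<beta>)"
  shows "(\<Sum>x\<in>{0..<p}. Legendre (x - \<alpha>) p * Legendre (x - \<beta>) p) = -1"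
proof -
  have "(\<Sum>x\<in>{0..<p}. Legendre (x - \<alpha>) p * Legendre (x - \<beta>) p)
      = (\<Sum>x\<in>{0..<p}. Legendre ((x - \<alpha>) * (x - \<beta>)) p)" by (simp add: leg_mult)
  also have "\<dots> = (\<Sum>y\<in>{0..<p}. Legendre (((1*y+\<alpha>) mod p - \<alpha>) * ((1*y+\<alpha>) mod p - \<beta>)) p)"
    using sum_aff[of 1 "\<lambda>x. Legendre ((x - \<alpha>) * (x - \<beta>)) p" \<alpha>] p5 by simp
  also have "\<dots> = (\<Sum>y\<in>{0..<p}. Legendre (y * (y - (\<beta> - \<alpha>))) p)"
  proof (rule sum.cong[OF refl])
    fix y
    have "[((1*y+\<alpha>) mod p - \<alpha>) * ((1*y+\<alpha>) mod p - \<beta>) = (y + \<alpha> - \<alpha>) * (y + \<alpha> - \<beta>)] (mod p)"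
      by (intro cong_mult cong_diff) (simp_all add: cong_def)
    then show "Legendre (((1*y+\<alpha>) mod p - \<alpha>) * ((1*y+\<alpha>) mod p - \<beta>)) p = Legendre (y * (y - (\<beta> - \<alpha>))) p"
      using leg_cong by (simp add: algebra_simps)
  qed
  also have "\<dots> = -1"
  proof (rule sum_quad0)
    show "\<not> p dvd (\<beta> - \<alpha>)" using assms by (metis dvd_minus_iff minus_diff_eq)
  qed
  finally show ?thesis .
qed

lemma count2:
  assumes d: "\<not> p dvd (\<alpha> - \<beta>)" and e1: "\<epsilon>1 = 1 \<or> \<epsilon>1 = -1" and e2: "\<epsilon>2 = 1 \<or> \<epsilon>2 = -1"
  shows "4 * int (card {x\<in>{0..<p}. Legendre (x - \<alpha>) p = \<epsilon>1 \<and> Legendre (x - \<beta>) p = \<epsilon>2})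
       = p - 2 - \<epsilon>2 * Legendre (\<alpha> - \<beta>) p - \<epsilon>1 * Legendre (\<beta> - \<alpha>) p - \<epsilon>1 * \<epsilon>2"
proof -
  define u where "u x = Legendre (x - \<alpha>) p" for x
  define v where "v x = Legendre (x - \<beta>) p" for x
  have d': "\<not> p dvd (\<beta> - \<alpha>)" using d by (metis dvd_minus_iff minus_diff_eq)
  have ind: "(if u x = \<epsilon>1 \<and> v x = \<epsilon>2 then 4 else 0) = (u x * u x + \<epsilon>1 * u x) * (v x * v x + \<epsilon>2 * v x)" for x
    using leg_vals[of "x - \<alpha>"] leg_vals[of "x - \<beta>"] e1 e2 unfolding u_def v_def by auto
  have "4 * int (card {x\<in>{0..<p}. u x = \<epsilon>1 \<and> v x = \<epsilon>2}) = 4 * (\<Sum>x\<in>{x\<in>{0..<p}. u x = \<epsilon>1 \<and> v x = \<epsilon>2}. (1::int))"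
    by simp
  also have "\<dots> = 4 * (\<Sum>x\<in>{0..<p}. if u x = \<epsilon>1 \<and> v x = \<epsilon>2 then 1 else 0)"
    by (subst sum.inter_filter) simp_all
  also have "\<dots> = (\<Sum>x\<in>{0..<p}. if u x = \<epsilon>1 \<and> v x = \<epsilon>2 then 4 else 0)"
    unfolding sum_distrib_left by (rule sum.cong) simp_all
  also have "\<dots> = (\<Sum>x\<in>{0..<p}. (u x * u x + \<epsilon>1 * u x) * (v x * v x + \<epsilon>2 * v x))"
    using ind by simp
  also have "\<dots> = (\<Sum>x\<in>{0..<p}. (u x * u x) * (v x * v x)) + \<epsilon>2 * (\<Sum>x\<in>{0..<p}. (u x * u x) * v x)
       + \<epsilon>1 * (\<Sum>x\<in>{0..<p}. (v x * v x) * u x) + \<epsilon>1 * \<epsilon>2 * (\<Sum>x\<in>{0..<p}. u x * v x)"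
    by (simp add: sum.distrib sum_distrib_left algebra_simps)
  also have "(\<Sum>x\<in>{0..<p}. (u x * u x) * (v x * v x)) = p - 2"
  proof -
    have "(\<Sum>x\<in>{0..<p}. (u x * u x) * (v x * v x)) = (\<Sum>x\<in>{0..<p}. v x * v x) - v (\<alpha> mod p) * v (\<alpha> mod p)"
      unfolding u_def by (rule sq_weight)
    moreover have "(\<Sum>x\<in>{0..<p}. v x * v x) = p - 1"
      using sq_weight[of \<beta> "\<lambda>x. 1"] sum_one leg_sq1[of "\<beta> mod p - \<beta>"] unfolding v_def
      by (simp add: leg_mod)
    moreover have "v (\<alpha> mod p) * v (\<alpha> mod p) = 1"
    proof -
      have "v (\<alpha> mod p) = Legendre (\<alpha> - \<beta>) p" unfolding v_def
        by (rule leg_cong) (simp add: cong_def mod_diff_left_eq)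
      then show ?thesis using leg_sq1[OF d] by simp
    qed
    ultimately show ?thesis by simp
  qed
  also have "(\<Sum>x\<in>{0..<p}. (u x * u x) * v x) = - Legendre (\<alpha> - \<beta>) p"
  proof -
    have "(\<Sum>x\<in>{0..<p}. (u x * u x) * v x) = (\<Sum>x\<in>{0..<p}. v x) - v (\<alpha> mod p)"
      unfolding u_def by (rule sq_weight)
    moreover have "(\<Sum>x\<in>{0..<p}. v x) = 0" unfolding v_def using leg_sum_aff[of 1 "-\<beta>"] p5 by simp
    moreover have "v (\<alpha> mod p) = Legendre (\<alpha> - \<beta>) p" unfolding v_def
      by (rule leg_cong) (simp add: cong_def mod_diff_left_eq)
    ultimately show ?thesis by simp
  qed
  also have "(\<Sum>x\<in>{0..<p}. (v x * v x) * u x) = - Legendre (\<beta> - \<alpha>) p"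
  proof -
    have "(\<Sum>x\<in>{0..<p}. (v x * v x) * u x) = (\<Sum>x\<in>{0..<p}. u x) - u (\<beta> mod p)"
      unfolding v_def by (rule sq_weight)
    moreover have "(\<Sum>x\<in>{0..<p}. u x) = 0" unfolding u_def using leg_sum_aff[of 1 "-\<alpha>"] p5 by simp
    moreover have "u (\<beta> mod p) = Legendre (\<beta> - \<alpha>) p" unfolding u_def
      by (rule leg_cong) (simp add: cong_def mod_diff_left_eq)
    ultimately show ?thesis by simp
  qed
  also have "(\<Sum>x\<in>{0..<p}. u x * v x) = -1" unfolding u_def v_def by (rule sum_quad[OF d])
  finally show ?thesis unfolding u_def v_def by (simp add: algebra_simps)
qed

end



context pset
begin

definition ss :: "int set \<Rightarrow> int set \<Rightarrow> int set" where
  "ss X Y = {(x + y) mod p | x y. x \<in> X \<and> y \<in> Y}"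

definition shift :: "int \<Rightarrow> int set \<Rightarrow> int set" where
  "shift e Y = (\<lambda>y. (y + e) mod p) ` Y"

lemma ss_sub: "ss X Y \<subseteq> {0..<p}" unfolding ss_def using S_mod by auto

lemma card_shift: "Y \<subseteq> {0..<p} \<Longrightarrow> card (shift e Y) = card Y"
  unfolding shift_def
  by (rule card_image, rule inj_on_subset[of _ "{0..<p}"]) (use aff_inj[of 1 e] p5 in auto)

lemma shift_sub: "shift e Y \<subseteq> {0..<p}" unfolding shift_def using S_mod by auto

lemma closure_all:
  assumes X: "X \<subseteq> {0..<p}" and x0: "x0 \<in> X" and d: "\<not> p dvd d"
    and cl: "\<And>x. x \<in> X \<Longrightarrow> (x + d) mod p \<in> X"
  shows "X = {0..<p}"
proof
  show "X \<subseteq> {0..<p}" by fact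
  have k: "(x0 + int k * d) mod p \<in> X" for k :: nat
  proof (induction k)
    case 0 then show ?case using x0 X by auto
  next
    case (Suc k)
    have "((x0 + int k * d) mod p + d) mod p \<in> X" using cl[OF Suc] .
    moreover have "((x0 + int k * d) mod p + d) mod p = (x0 + int (Suc k) * d) mod p"
    proof -
      have "((x0 + int k * d) mod p + d) mod p = (x0 + int k * d + d) mod p" by (rule mod_add_left_eq)
      also have "x0 + int k * d + d = x0 + int (Suc k) * d" by (simp add: algebra_simps)
      finally show ?thesis .
    qed
    ultimately show ?case by simp
  qed
  show "{0..<p} \<subseteq> X"
  proof
    fix z assume z: "z \<in> {0..<p}"
    have "coprime p d" by (rule prime_imp_coprime[OF pp d])
    then have "coprime d p" using coprime_commute[THEN iffD1] by blast
    then obtain t where t: "[d * t = 1] (mod p)" using cong_solve_coprime_int by blast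
    define k where "k = nat (((z - x0) * t) mod p)"
    have kk: "int k = ((z - x0) * t) mod p" unfolding k_def using p_pos by simp
    have "[x0 + int k * d = x0 + ((z - x0) * t) * d] (mod p)"
      unfolding kk by (intro cong_add cong_mult) (simp_all add: cong_def)
    moreover have "[x0 + ((z - x0) * t) * d = x0 + (z - x0) * 1] (mod p)"
    proof -
      have "[(z - x0) * (d * t) = (z - x0) * 1] (mod p)" using t cong_scalar_left by blast
      then show ?thesis by (intro cong_add) (simp_all add: algebra_simps)
    qed
    ultimately have "[x0 + int k * d = z] (mod p)" using cong_trans by fastforce
    then have "(x0 + int k * d) mod p = z" using z by (simp add: cong_def)
    then show "z \<in> X" using k by metis
  qed
qed

lemma CD_aux:
  "\<forall>X Y. card Y = n \<longrightarrow> X \<subseteq> {0..<p} \<longrightarrow> Y \<subseteq> {0..<p} \<longrightarrow> X \<noteq> {} \<longrightarrow> Y \<noteq> {} \<longrightarrow>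
     min p (int (card X) + int (card Y) - 1) \<le> int (card (ss X Y))"
proof (induction n rule: less_induct)
  case (less n)
  show ?case
  proof (intro allI impI)
    fix X Y assume cY: "card Y = n" and XS: "X \<subseteq> {0..<p}" and YS: "Y \<subseteq> {0..<p}"
      and Xne: "X \<noteq> {}" and Yne: "Y \<noteq> {}"
    have fX: "finite X" using XS finite_subset by blast
    have fY: "finite Y" using YS finite_subset by blast
    have fss: "finite (ss X Y)" using ss_sub finite_subset by blast
    show "min p (int (card X) + int (card Y) - 1) \<le> int (card (ss X Y))"
    proof (cases "card Y = 1")
      case True
      then obtain y where Y: "Y = {y}" using card_1_singletonE by blast
      have "ss X Y = shift y X" unfolding ss_def shift_def Y by auto
      then have "card (ss X Y) = card X" using card_shift[OF XS] by simp
      then show ?thesis using True by simp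
    next
      case False
      have "card Y \<noteq> 0" using card_0_eq[OF fY] Yne by simp
      then have c2: "\<not> card Y \<le> Suc 0" using False by linarith
      have "\<not> (\<forall>a\<in>Y. \<forall>b\<in>Y. a = b)" using card_le_Suc0_iff_eq[OF fY] c2 by blast
      then obtain y0 y1 where y0: "y0 \<in> Y" and y1: "y1 \<in> Y" and y01: "y0 \<noteq> y1" by blast
      show ?thesis
      proof (cases "\<exists>e. {y \<in> Y. (y + e) mod p \<in> X} \<noteq> {} \<and> {y \<in> Y. (y + e) mod p \<in> X} \<noteq> Y")
        case True
        then obtain e where e1: "{y \<in> Y. (y + e) mod p \<in> X} \<noteq> {}" and e2: "{y \<in> Y. (y + e) mod p \<in> X} \<noteq> Y"
          by blast
        define Y' where "Y' = {y \<in> Y. (y + e) mod p \<in> X}"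
        define X' where "X' = X \<union> shift e Y"
        have Y'S: "Y' \<subseteq> {0..<p}" using YS Y'_def by auto
        have X'S: "X' \<subseteq> {0..<p}" using XS shift_sub X'_def by auto
        have Y'sub: "Y' \<subset> Y" using Y'_def e2 by auto
        have cY': "card Y' < n" using psubset_card_mono[OF fY Y'sub] cY by simp
        have inter: "X \<inter> shift e Y = shift e Y'" unfolding shift_def Y'_def by auto
        have fsh: "finite (shift e Y)" using shift_sub finite_subset by blast
        have "card X' + card (X \<inter> shift e Y) = card X + card (shift e Y)"
          unfolding X'_def using card_Un_Int[OF fX fsh] by simp
        then have sumc: "card X' + card Y' = card X + card Y"
          using inter card_shift[OF YS] card_shift[OF Y'S] by simp
        have sub: "ss X' Y' \<subseteq> ss X Y"
        proof
          fix z assume "z \<in> ss X' Y'"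
          then obtain x y where z: "z = (x + y) mod p" and x: "x \<in> X'" and y: "y \<in> Y'" unfolding ss_def by blast
          show "z \<in> ss X Y"
          proof (cases "x \<in> X")
            case True then show ?thesis using z y Y'_def unfolding ss_def by blast
          next
            case False
            then obtain w where w: "w \<in> Y" and xw: "x = (w + e) mod p" using x X'_def shift_def by auto
            have "z = (w + e + y) mod p" unfolding z xw by (rule mod_add_left_eq)
            also have "\<dots> = (y + e + w) mod p" by (simp add: algebra_simps)
            also have "\<dots> = ((y + e) mod p + w) mod p" by (rule mod_add_left_eq[symmetric])
            finally have "z = ((y + e) mod p + w) mod p" .
            moreover have "(y + e) mod p \<in> X" using y Y'_def by blast
            ultimately show ?thesis using w unfolding ss_def by blast
          qed
        qed
        have X'ne: "X' \<noteq> {}" using Xne X'_def by auto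
        have "min p (int (card X') + int (card Y') - 1) \<le> int (card (ss X' Y'))"
          using less.IH[OF cY'] X'S Y'S X'ne e1 Y'_def by blast
        moreover have "card (ss X' Y') \<le> card (ss X Y)" using card_mono[OF fss sub] .
        ultimately show ?thesis using sumc by linarith
      next
        case False
        have cl: "(x + (y1 - y0)) mod p \<in> X" if x: "x \<in> X" for x
        proof -
          define e where "e = (x - y0) mod p"
          have "(y0 + e) mod p = x" unfolding e_def using x XS by (auto simp: mod_add_right_eq)
          then have "y0 \<in> {y \<in> Y. (y + e) mod p \<in> X}" using y0 x by simp
          then have "{y \<in> Y. (y + e) mod p \<in> X} = Y" using False by blast
          then have "(y1 + e) mod p \<in> X" using y1 by blast
          moreover have "(y1 + e) mod p = (x + (y1 - y0)) mod p" unfolding e_def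
            by (simp add: mod_add_right_eq algebra_simps)
          ultimately show ?thesis by simp
        qed
        have nd: "\<not> p dvd (y1 - y0)"
        proof
          assume "p dvd (y1 - y0)"
          then have "y1 mod p = y0 mod p" by (simp add: mod_eq_dvd_iff)
          moreover have "y1 mod p = y1" "y0 mod p = y0" using y0 y1 YS mod_eq_in by auto
          ultimately show False using y01 by simp
        qed
        obtain x0 where x0: "x0 \<in> X" using Xne by blast
        have XA: "X = {0..<p}" using closure_all[OF XS x0 nd cl] .
        have "ss X Y = {0..<p}"
        proof
          show "ss X Y \<subseteq> {0..<p}" by (rule ss_sub)
          show "{0..<p} \<subseteq> ss X Y"
          proof
            fix z assume z: "z \<in> {0..<p}"
            have "(z - y0) mod p \<in> X" using XA S_mod by simp
            moreover have "((z - y0) mod p + y0) mod p = z" using z by (simp add: mod_add_left_eq)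
            ultimately show "z \<in> ss X Y" using y0 unfolding ss_def by force
          qed
        qed
        then show ?thesis using p_pos by simp
      qed
    qed
  qed
qed

lemma CD:
  assumes "X \<subseteq> {0..<p}" "Y \<subseteq> {0..<p}" "X \<noteq> {}" "Y \<noteq> {}"
  shows "min p (int (card X) + int (card Y) - 1) \<le> int (card (ss X Y))"
  using CD_aux assms by blast

end



context pset2
begin

lemma p_odd: "odd p" using prime_odd_int[OF pp] p5 by simp

lemma inR: "x \<in> QRset p \<longleftrightarrow> x \<in> {0..<p} \<and> Legendre x p = 1"
proof
  assume x: "x \<in> QRset p"
  then have x1: "x \<in> {1..p-1}" and q: "QuadRes p x" unfolding QRset_def by auto
  have "\<not> [x = 0] (mod p)" using notdvd_small[of x] x1 by (auto simp: cong_0_iff)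
  then show "x \<in> {0..<p} \<and> Legendre x p = 1" using x1 q unfolding Legendre_def by auto
next
  assume h: "x \<in> {0..<p} \<and> Legendre x p = 1"
  then have "\<not> [x = 0] (mod p)" "QuadRes p x" unfolding Legendre_def by (auto split: if_splits)
  moreover have "x \<noteq> 0" using calculation(1) by auto
  ultimately show "x \<in> QRset p" using h unfolding QRset_def by auto
qed

lemma inR_mod: "(x mod p) \<in> QRset p \<longleftrightarrow> Legendre x p = 1"
  using inR[of "x mod p"] S_mod[of x] leg_mod[of x] by simp

lemma QR_sub: "QRset p \<subseteq> {0..<p}"
proof
  fix x assume "x \<in> QRset p" then show "x \<in> {0..<p}" using inR by blast
qed

lemma cardR: "2 * int (card (QRset p)) = p - 1"
proof -
  have e: "QRset p = {x\<in>{0..<p}. Legendre x p = 1}"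
    by (auto simp: inR)
  have ind: "(if Legendre x p = 1 then 2 else 0) = Legendre (x - 0) p * Legendre (x - 0) p * 1 + Legendre (1*x+0) p" for x
    using leg_vals[of x] by auto
  have ci: "int (card B) = (\<Sum>x\<in>B. (1::int))" for B :: "int set" by simp
  have "2 * int (card (QRset p)) = 2 * (\<Sum>x\<in>{x\<in>{0..<p}. Legendre x p = 1}. (1::int))"
    unfolding e ci ..
  also have "\<dots> = 2 * (\<Sum>x\<in>{0..<p}. if Legendre x p = 1 then 1 else 0)"
    by (subst sum.inter_filter) simp_all
  also have "\<dots> = (\<Sum>x\<in>{0..<p}. if Legendre x p = 1 then 2 else 0)"
    unfolding sum_distrib_left by (rule sum.cong) simp_all
  also have "\<dots> = (\<Sum>x\<in>{0..<p}. Legendre (x - 0) p * Legendre (x - 0) p * 1 + Legendre (1*x+0) p)"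
    by (rule sum.cong[OF refl]) (rule ind)
  also have "\<dots> = (\<Sum>x\<in>{0..<p}. Legendre (x - 0) p * Legendre (x - 0) p * 1) + (\<Sum>x\<in>{0..<p}. Legendre (1*x+0) p)"
    by (rule sum.distrib)
  also have "(\<Sum>x\<in>{0..<p}. Legendre (x - 0) p * Legendre (x - 0) p * 1) = p - 1"
    using sq_weight[of 0 "\<lambda>x. 1"] sum_one by simp
  also have "(\<Sum>x\<in>{0..<p}. Legendre (1*x+0) p) = 0" using leg_sum_aff[of 1 0] p5 by simp
  finally show ?thesis by simp
qed

lemma notdvd_R: "a \<in> QRset p \<Longrightarrow> \<not> p dvd a"
proof -
  assume "a \<in> QRset p"
  then have "Legendre a p = 1" using inR by blast
  then show "\<not> p dvd a" using leg_zero[of a] by auto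
qed

lemma leg_R: "a \<in> QRset p \<Longrightarrow> Legendre a p = 1" using inR by auto

lemma notdvd_2a: "a \<in> QRset p \<Longrightarrow> \<not> p dvd (2*a)"
proof
  assume a: "a \<in> QRset p" and "p dvd 2*a"
  then have "p dvd 2 \<or> p dvd a" using prime_dvd_mult_iff[OF pp] by blast
  then show False using notdvd_small[of 2] p5 notdvd_R[OF a] by auto
qed

definition N :: "int \<Rightarrow> int set" where
  "N a = {x\<in>{0..<p}. Legendre (x - 0) p = 1 \<and> Legendre (x - 2*a) p = 1}"

definition h2 :: int where "h2 = (p + 1) div 2"

definition I :: "int \<Rightarrow> int set" where
  "I c = {x\<in>{0..<p}. Legendre (x - 0) p = 1 \<and> Legendre (x - c*h2) p = -1}"

lemma cardN: assumes a: "a \<in> QRset p" shows "4 * int (card (N a)) = p - 1"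
proof -
  have d: "\<not> p dvd (0 - 2*a)" using notdvd_2a[OF a] by simp
  have l: "Legendre (2*a) p = -1" using leg_mult[of 2 a] leg_2 leg_R[OF a] by simp
  have "4 * int (card (N a)) = p - 2 - 1 * Legendre (0 - 2*a) p - 1 * Legendre (2*a - 0) p - 1*1"
    unfolding N_def by (rule count2[OF d]) simp_all
  also have "Legendre (0 - 2*a) p = -1" using leg_neg[of "2*a"] l by simp
  finally show ?thesis using l by simp
qed

lemma h2_prop: "2 * h2 = p + 1" "0 < h2" "h2 < p"
  using p_odd p5 unfolding h2_def by (auto elim!: oddE)

lemma cardI: assumes c: "c \<in> QRset p" shows "4 * int (card (I c)) = p - 1"
proof -
  have "\<not> p dvd h2" using notdvd_small h2_prop by simp
  then have "\<not> p dvd (c * h2)" using notdvd_R[OF c] prime_dvd_mult_iff[OF pp] by blast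
  then have d: "\<not> p dvd (0 - c*h2)" by simp
  have "4 * int (card (I c)) = p - 2 - (-1) * Legendre (0 - c*h2) p - 1 * Legendre (c*h2 - 0) p - 1*(-1)"
    unfolding I_def by (rule count2[OF d]) simp_all
  also have "Legendre (0 - c*h2) p = Legendre (c*h2) p" using leg_neg[of "c*h2"] by simp
  finally show ?thesis by simp
qed

lemma memN: "b \<in> N a \<longleftrightarrow> b \<in> QRset p \<and> (2*a - b) mod p \<in> QRset p"
proof -
  have "Legendre (b - 2*a) p = Legendre (2*a - b) p" using leg_neg[of "2*a - b"] by simp
  then show ?thesis unfolding N_def using inR inR_mod by auto
qed

lemma N_sym: "b \<in> N a \<Longrightarrow> (2*a - b) mod p \<in> N a"
proof -
  assume b: "b \<in> N a"
  then have bR: "b \<in> QRset p" and r: "(2*a - b) mod p \<in> QRset p" using memN by auto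
  have "(2*a - (2*a - b) mod p) mod p = (2*a - (2*a - b)) mod p" by (simp add: mod_diff_right_eq)
  also have "\<dots> = b" using bR QR_sub by auto
  finally show ?thesis using memN r bR by simp
qed

lemma N_sub: "N a \<subseteq> {0..<p}" unfolding N_def by auto

lemma memI: "x \<in> I c \<longleftrightarrow> x \<in> QRset p \<and> (2*x - c) mod p \<in> QRset p"
proof -
  have "[2*x - c = 2 * (x - c*h2)] (mod p)"
  proof -
    have "(2*x - c) - 2 * (x - c*h2) = c * p"
    proof -
      have "(2*x - c) - 2 * (x - c*h2) = c * (2 * h2) - c" by (simp add: algebra_simps)
      then show ?thesis using h2_prop(1) by (simp add: algebra_simps)
    qed
    then show ?thesis by (simp add: cong_iff_dvd_diff)
  qed
  then have "Legendre (2*x - c) p = Legendre (2 * (x - c*h2)) p" by (rule leg_cong)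
  also have "\<dots> = - Legendre (x - c*h2) p" using leg_mult[of 2 "x - c*h2"] leg_2 by simp
  finally have "Legendre (2*x - c) p = - Legendre (x - c*h2) p" .
  then have "Legendre (2*x - c) p = 1 \<longleftrightarrow> Legendre (x - c*h2) p = -1" by auto
  then show ?thesis unfolding I_def using inR inR_mod by auto
qed

lemma I_sub: "I c \<subseteq> {0..<p}" unfolding I_def by auto

definition E :: "int set" where "E = {(p + 3) div 2, (p - 3) div 2}"

lemma cardE: "card E \<le> 2" unfolding E_def by (simp add: card_insert_if)

lemma RprimeE: "Rprime p = QRset p - E" unfolding Rprime_def E_def by simp

lemma pre_le: assumes "inj_on f {0..<p}" "finite B"
  shows "card {x\<in>{0..<p}. f x \<in> B} \<le> card B"
  by (rule card_inj_on_le[OF inj_on_subset[OF assms(1)] _ assms(2)]) auto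

lemma edge:
  assumes x: "x \<in> Rprime p" and y: "y \<in> Rprime p" and z: "(2*x - y) mod p \<in> Rprime p"
  shows "(x, y) \<in> D_edges p"
proof -
  define z where "z = (2*x - y) mod p"
  have c1: "[2 * x = y + z] (mod p)" unfolding z_def cong_def by (simp add: mod_add_right_eq)
  have c2: "\<not> [y + z = 3] (mod p)"
  proof
    assume "[y + z = 3] (mod p)"
    then have c: "[2 * x = 3] (mod p)" using c1 cong_trans by blast
    define e where "e = (p + 3) div 2"
    have "2 * e = p + 3" using p_odd unfolding e_def by (auto elim!: oddE)
    then have "[2 * e = 3] (mod p)" by (simp add: cong_def)
    then have "[2 * x = 2 * e] (mod p)" using c cong_sym cong_trans by blast
    moreover have "coprime 2 p"
      using prime_imp_coprime[OF pp, of 2] notdvd_small[of 2] p5 coprime_commute by auto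
    ultimately have "[x = e] (mod p)" using cong_mult_lcancel by blast
    moreover have "x \<in> {0..<p}" using x QR_sub unfolding Rprime_def by auto
    moreover have "e \<in> {0..<p}" using p5 unfolding e_def by auto
    ultimately have "x = e" by (simp add: cong_def)
    then show False using x unfolding Rprime_def e_def by simp
  qed
  show ?thesis unfolding D_edges_def using x y z c1 c2 z_def by blast
qed

end



context pset2
begin

lemma double_count:
  assumes AS: "A \<subseteq> {0..<p}"
  shows "(\<Sum>d\<in>{0..<p}. card {x\<in>A. (x - d) mod p \<in> A}) = card A * card A"
proof -
  have fA: "finite A" using AS finite_subset by blast
  have "(\<Sum>d\<in>{0..<p}. card {x\<in>A. (x - d) mod p \<in> A})
      = (\<Sum>d\<in>{0..<p}. \<Sum>x\<in>A. if (x - d) mod p \<in> A then 1 else 0)"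
  proof (rule sum.cong[OF refl])
    fix d
    show "card {x\<in>A. (x - d) mod p \<in> A} = (\<Sum>x\<in>A. if (x - d) mod p \<in> A then 1 else 0)"
      using sum.inter_filter[OF fA, of "\<lambda>x. (1::nat)" "\<lambda>x. (x - d) mod p \<in> A"] by simp
  qed
  also have "\<dots> = (\<Sum>x\<in>A. \<Sum>d\<in>{0..<p}. if (x - d) mod p \<in> A then 1 else 0)"
    by (rule sum.swap)
  also have "\<dots> = (\<Sum>x\<in>A. card A)"
  proof (rule sum.cong[OF refl])
    fix x assume x: "x \<in> A"
    define f where "f d = ((-1) * d + x) mod p" for d
    have fe: "f d = (x - d) mod p" for d unfolding f_def by simp
    have bij: "bij_betw f {0..<p} {0..<p}" unfolding f_def by (rule aff_bij) (use p5 in simp)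
    have "(\<Sum>d\<in>{0..<p}. if (x - d) mod p \<in> A then 1 else (0::nat)) = card {d\<in>{0..<p}. f d \<in> A}"
      using sum.inter_filter[of "{0..<p}" "\<lambda>x. (1::nat)" "\<lambda>d. f d \<in> A"] fe by simp
    also have "\<dots> = card (f ` {d\<in>{0..<p}. f d \<in> A})"
      by (rule card_image[symmetric], rule inj_on_subset[OF bij_betw_imp_inj_on[OF bij]]) auto
    also have "f ` {d\<in>{0..<p}. f d \<in> A} = A"
    proof
      show "f ` {d \<in> {0..<p}. f d \<in> A} \<subseteq> A" by auto
      show "A \<subseteq> f ` {d \<in> {0..<p}. f d \<in> A}"
      proof
        fix a assume a: "a \<in> A"
        then have "a \<in> f ` {0..<p}" using bij AS unfolding bij_betw_def by auto
        then obtain d where "d \<in> {0..<p}" "a = f d" by blast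
        then show "a \<in> f ` {d \<in> {0..<p}. f d \<in> A}" using a by blast
      qed
    qed
    finally show "(\<Sum>d\<in>{0..<p}. if (x - d) mod p \<in> A then 1 else 0) = card A" .
  qed
  also have "\<dots> = card A * card A" by simp
  finally show ?thesis .
qed

end

locale pset3 = pset2 +
  assumes big: "p \<ge> 1711"
begin

lemma main_closed:
  assumes AR: "A \<subseteq> Rprime p" and u: "u \<in> A"
    and cl: "\<And>a b. a \<in> A \<Longrightarrow> b \<in> Rprime p \<Longrightarrow> (2*a - b) mod p \<in> Rprime p \<Longrightarrow> b \<in> A"
  shows "A = Rprime p"
proof (rule ccontr)
  assume "A \<noteq> Rprime p"
  then obtain c where cR: "c \<in> Rprime p" and cA: "c \<notin> A" using AR by blast
  define C where "C = Rprime p - A"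
  have RpR: "Rprime p \<subseteq> QRset p" unfolding Rprime_def by blast
  have RpS: "Rprime p \<subseteq> {0..<p}" using RpR QR_sub by blast
  have AS: "A \<subseteq> {0..<p}" using AR RpS by blast
  have fA: "finite A" using AS finite_subset by blast
  have fRp: "finite (Rprime p)" using RpS finite_subset by blast
  have fR: "finite (QRset p)" using QR_sub finite_subset by blast
  have fE: "finite E" unfolding E_def by simp
  have RpE: "\<And>x. x \<in> QRset p \<Longrightarrow> x \<notin> E \<Longrightarrow> x \<in> Rprime p" unfolding Rprime_def E_def by blast
  have fN: "finite (N a)" for a using N_sub finite_subset by blast
  have fI: "finite (I a)" for a using I_sub finite_subset by blast
  have ff: "finite {x\<in>{0..<p}. P x}" for P by (rule finite_subset[of _ "{0..<p}"]) auto

  have F1: "card (N a - A) \<le> 4" if a: "a \<in> A" for a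
  proof -
    have "N a - A \<subseteq> E \<union> {b\<in>{0..<p}. ((-1)*b + 2*a) mod p \<in> E}"
    proof
      fix b assume b: "b \<in> N a - A"
      then have bR: "b \<in> QRset p" and zR: "(2*a - b) mod p \<in> QRset p" using memN by auto
      have bS: "b \<in> {0..<p}" using b N_sub by blast
      show "b \<in> E \<union> {b\<in>{0..<p}. ((-1)*b + 2*a) mod p \<in> E}"
      proof (rule ccontr)
        assume "b \<notin> E \<union> {b\<in>{0..<p}. ((-1)*b + 2*a) mod p \<in> E}"
        then have "b \<notin> E" "(2*a - b) mod p \<notin> E" using bS by auto
        then have "b \<in> Rprime p" "(2*a - b) mod p \<in> Rprime p" using RpE bR zR by auto
        then have "b \<in> A" using cl[OF a] by blast
        then show False using b by blast
      qed
    qed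
    then have "card (N a - A) \<le> card (E \<union> {b\<in>{0..<p}. ((-1)*b + 2*a) mod p \<in> E})"
      by (rule card_mono[rotated]) (use fE ff in simp)
    also have "\<dots> \<le> card E + card {b\<in>{0..<p}. ((-1)*b + 2*a) mod p \<in> E}" by (rule card_Un_le)
    also have "card {b\<in>{0..<p}. ((-1)*b + 2*a) mod p \<in> E} \<le> card E"
      by (rule pre_le[OF aff_inj fE]) (use p5 in simp)
    finally show ?thesis using cardE by simp
  qed

  have cRR: "c \<in> QRset p" using cR RpR by blast
  have F2: "card (I c - C) \<le> 4"
  proof -
    have "I c - C \<subseteq> E \<union> {x\<in>{0..<p}. (2*x + (-c)) mod p \<in> E}"
    proof
      fix x assume x: "x \<in> I c - C"
      then have xR: "x \<in> QRset p" and zR: "(2*x - c) mod p \<in> QRset p" using memI by auto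
      have xS: "x \<in> {0..<p}" using x I_sub by blast
      show "x \<in> E \<union> {x\<in>{0..<p}. (2*x + (-c)) mod p \<in> E}"
      proof (rule ccontr)
        assume "x \<notin> E \<union> {x\<in>{0..<p}. (2*x + (-c)) mod p \<in> E}"
        then have "x \<notin> E" "(2*x - c) mod p \<notin> E" using xS by auto
        then have xRp: "x \<in> Rprime p" and zRp: "(2*x - c) mod p \<in> Rprime p" using RpE xR zR by auto
        show False
        proof (cases "x \<in> A")
          case True
          have "c \<in> A" by (rule cl[OF True cR zRp])
          then show False using cA by blast
        next
          case False
          then have "x \<in> C" using xRp C_def by blast
          then show False using x by blast
        qed
      qed
    qed
    then have "card (I c - C) \<le> card (E \<union> {x\<in>{0..<p}. (2*x + (-c)) mod p \<in> E})"
      by (rule card_mono[rotated]) (use fE ff in simp)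
    also have "\<dots> \<le> card E + card {x\<in>{0..<p}. (2*x + (-c)) mod p \<in> E}" by (rule card_Un_le)
    also have "card {x\<in>{0..<p}. (2*x + (-c)) mod p \<in> E} \<le> card E"
      by (rule pre_le[OF aff_inj fE]) (use notdvd_small[of 2] p5 in simp)
    finally show ?thesis using cardE by simp
  qed

  have cN: "4 * int (card (N a)) = p - 1" if "a \<in> A" for a using cardN that AR RpR by blast
  have cI: "4 * int (card (I c)) = p - 1" using cardI[OF cRR] .
  have cR2: "2 * int (card (QRset p)) = p - 1" by (rule cardR)
  have AC: "card A + card C = card (Rprime p)"
    unfolding C_def using card_Diff_subset[OF fA AR] card_mono[OF fRp AR] by simp
  have RpleR: "card (Rprime p) \<le> card (QRset p)" by (rule card_mono[OF fR RpR])
  have Cge: "card (I c) \<le> card C + 4"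
  proof -
    have "card (I c) = card (I c \<inter> C) + card (I c - C)" by (rule card_Int_Diff[OF fI])
    moreover have "card (I c \<inter> C) \<le> card C"
      by (rule card_mono) (use fRp C_def in auto)
    ultimately show ?thesis using F2 by linarith
  qed
  have NA: "card (N a) \<le> card (N a \<inter> A) + 4" if "a \<in> A" for a
    using card_Int_Diff[OF fN, of a A] F1[OF that] by linarith
  have NAle: "card (N a \<inter> A) \<le> card A" for a by (rule card_mono[OF fA]) auto
  have Alow: "4 * int (card A) \<ge> p - 17"
    using NA[OF u] NAle[of u] cN[OF u] by linarith
  have Aup: "4 * int (card A) \<le> p + 15"
    using Cge cI AC RpleR cR2 by linarith
  have F3: "card (A - N a) \<le> 8" if a: "a \<in> A" for a
  proof -
    have "card A = card (A \<inter> N a) + card (A - N a)" by (rule card_Int_Diff[OF fA])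
    moreover have "card (A \<inter> N a) = card (N a \<inter> A)" by (simp add: Int_commute)
    ultimately show ?thesis using NA[OF a] cN[OF a] Aup by linarith
  qed

  have F4: "card A \<le> card {x\<in>A. (x - (2*a - 2*b)) mod p \<in> A} + 24" if a: "a \<in> A" and b: "b \<in> A" for a b
  proof -
    define G where "G = {x\<in>A. (x - (2*a - 2*b)) mod p \<in> A}"
    define B2 where "B2 = {x\<in>{0..<p}. ((-1)*x + 2*a) mod p \<in> N a - A}"
    define B3 where "B3 = {x\<in>{0..<p}. ((-1)*x + 2*a) mod p \<in> A - N b}"
    define B4 where "B4 = {x\<in>{0..<p}. (1*x + (2*b - 2*a)) mod p \<in> N b - A}"
    have fin1: "finite (N a - A)" "finite (A - N b)" "finite (N b - A)" using fN fA by auto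
    have nd1: "\<not> p dvd (-1)" "\<not> p dvd 1" using notdvd_small[of 1] p5 by auto
    have c2: "card B2 \<le> 4" unfolding B2_def
      using pre_le[OF aff_inj[OF nd1(1)] fin1(1), of "2*a"] F1[OF a] by linarith
    have c3: "card B3 \<le> 8" unfolding B3_def
      using pre_le[OF aff_inj[OF nd1(1)] fin1(2), of "2*a"] F3[OF b] by linarith
    have c4: "card B4 \<le> 4" unfolding B4_def
      using pre_le[OF aff_inj[OF nd1(2)] fin1(3), of "2*b - 2*a"] F1[OF b] by linarith
    have sub: "A - G \<subseteq> (A - N a) \<union> B2 \<union> B3 \<union> B4"
    proof
      fix x assume x: "x \<in> A - G"
      have xS: "x \<in> {0..<p}" using x AS by blast
      show "x \<in> (A - N a) \<union> B2 \<union> B3 \<union> B4"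
      proof (rule ccontr)
        assume nx: "x \<notin> (A - N a) \<union> B2 \<union> B3 \<union> B4"
        have xN: "x \<in> N a" using nx x by blast
        define y where "y = (2*a - x) mod p"
        have ye: "((-1)*x + 2*a) mod p = y" unfolding y_def by simp
        have yN: "y \<in> N a" unfolding y_def using N_sym[OF xN] .
        have yA: "y \<in> A" using nx xS yN ye unfolding B2_def by blast
        have yNb: "y \<in> N b" using nx xS yA ye unfolding B3_def by blast
        define w where "w = (2*b - y) mod p"
        have wN: "w \<in> N b" unfolding w_def using N_sym[OF yNb] .
        have we: "w = (x - (2*a - 2*b)) mod p"
          unfolding w_def y_def by (simp add: mod_diff_right_eq algebra_simps)
        have we2: "(1*x + (2*b - 2*a)) mod p = w" unfolding we by (simp add: algebra_simps)
        have wA: "w \<in> A" using nx xS wN we2 unfolding B4_def by blast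
        then have "x \<in> G" unfolding G_def using x we by simp
        then show False using x by blast
      qed
    qed
    have fin2: "finite ((A - N a) \<union> B2 \<union> B3 \<union> B4)" unfolding B2_def B3_def B4_def by (intro finite_UnI finite_Diff fA ff)
    have "card (A - G) \<le> card ((A - N a) \<union> B2 \<union> B3 \<union> B4)" by (rule card_mono[OF fin2 sub])
    also have "\<dots> \<le> card (A - N a) + card B2 + card B3 + card B4"
      by (meson add_mono card_Un_le dual_order.trans le_refl)
    finally have "card (A - G) \<le> 24" using F3[OF a] c2 c3 c4 by linarith
    moreover have "card A = card (A \<inter> G) + card (A - G)" by (rule card_Int_Diff[OF fA])
    moreover have "A \<inter> G = G" unfolding G_def by blast
    then have "card (A \<inter> G) = card G" by simp
    ultimately have "card A \<le> card G + 24" by linarith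
    then show ?thesis unfolding G_def .
  qed
  define X where "X = (\<lambda>a. (2*a + 0) mod p) ` A"
  define Y where "Y = (\<lambda>b. ((-2)*b + 0) mod p) ` A"
  have n2: "\<not> p dvd 2" "\<not> p dvd (-2)" using notdvd_small[of 2] p5 by auto
  have cX: "card X = card A" unfolding X_def
    by (rule card_image, rule inj_on_subset[OF aff_inj[OF n2(1)] AS])
  have cY: "card Y = card A" unfolding Y_def
    by (rule card_image, rule inj_on_subset[OF aff_inj[OF n2(2)] AS])
  have XS: "X \<subseteq> {0..<p}" unfolding X_def using S_mod by auto
  have YS: "Y \<subseteq> {0..<p}" unfolding Y_def using S_mod by auto
  have Xne: "X \<noteq> {}" unfolding X_def using u by blast
  have Yne: "Y \<noteq> {}" unfolding Y_def using u by blast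
  have CDr: "min p (int (card X) + int (card Y) - 1) \<le> int (card (ss X Y))"
    by (rule CD[OF XS YS Xne Yne])
  define g where "g d = int (card {x\<in>A. (x - d) mod p \<in> A})" for d
  have Dg_lb: "int (card A) - 24 \<le> g d" if d: "d \<in> ss X Y" for d
  proof -
    obtain x' y' where d': "d = (x' + y') mod p" and x': "x' \<in> X" and y': "y' \<in> Y"
      using d unfolding ss_def by blast
    obtain a where a: "a \<in> A" and xa: "x' = (2*a + 0) mod p" using x' X_def by blast
    obtain b where b: "b \<in> A" and yb: "y' = ((-2)*b + 0) mod p" using y' Y_def by blast
    have dd: "d = (2*a - 2*b) mod p" unfolding d' xa yb by (simp add: mod_add_eq)
    have "(x - d) mod p = (x - (2*a - 2*b)) mod p" for x
      unfolding dd by (simp add: mod_diff_right_eq)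
    then have "{x\<in>A. (x - d) mod p \<in> A} = {x\<in>A. (x - (2*a - 2*b)) mod p \<in> A}" by simp
    then show ?thesis unfolding g_def using F4[OF a b] by simp
  qed
  have fD: "finite (ss X Y)" using ss_sub finite_subset by blast
  have s1: "of_nat (card (ss X Y)) * (int (card A) - 24) \<le> (\<Sum>d\<in>ss X Y. g d)"
    by (rule sum_bounded_below) (rule Dg_lb)
  have s2: "(\<Sum>d\<in>ss X Y. g d) \<le> (\<Sum>d\<in>{0..<p}. g d)"
    by (rule sum_mono2) (auto simp: g_def ss_sub)
  have s3: "(\<Sum>d\<in>{0..<p}. g d) = int (card A) * int (card A)"
  proof -
    have "(\<Sum>d\<in>{0..<p}. g d) = int (\<Sum>d\<in>{0..<p}. card {x\<in>A. (x - d) mod p \<in> A})"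
      by (simp add: g_def of_nat_sum)
    also have "\<dots> = int (card A * card A)" using double_count[OF AS] by simp
    finally show ?thesis by simp
  qed
  define n where "n = int (card A)"
  define D where "D = int (card (ss X Y))"
  have h1: "D * (n - 24) \<le> n * n" using s1 s2 s3 unfolding D_def n_def by simp
  have h2: "4 * n \<ge> p - 17" "4 * n \<le> p + 15" using Alow Aup unfolding n_def by auto
  have h3: "min p (2 * n - 1) \<le> D" using CDr cX cY unfolding D_def n_def by simp
  have h4: "2 * n - 1 \<le> D" using h3 h2 big by linarith
  have h5: "n \<ge> 424" using h2 big by linarith
  have "(2 * n - 1) * (n - 24) \<le> D * (n - 24)" by (rule mult_right_mono[OF h4]) (use h5 in linarith)
  moreover have "(2 * n - 1) * (n - 24) = 2 * (n * n) - 49 * n + 24" by (simp add: algebra_simps)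
  moreover have "424 * n \<le> n * n" by (rule mult_right_mono[OF h5]) (use h5 in linarith)
  ultimately show False using h1 h5 by linarith
qed

end


theorem lemma2p6:
  fixes p :: int
  assumes "prime p" and "p \<ge> 1711"
    and "QuadRes p (-1)" and "\<not> QuadRes p 2" and "\<not> QuadRes p 3"
  shows "\<forall>u \<in> Rprime p. \<forall>v \<in> Rprime p. (u, v) \<in> (D_edges p)\<^sup>*"
proof -
  interpret pset3 p by unfold_locales (use assms in auto)
  show ?thesis
  proof (intro ballI)
    fix u v assume u: "u \<in> Rprime p" and v: "v \<in> Rprime p"
    define A where "A = {w \<in> Rprime p. (u, w) \<in> (D_edges p)\<^sup>*}"
    have "A = Rprime p"
    proof (rule main_closed)
      show "A \<subseteq> Rprime p" unfolding A_def by blast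
      show "u \<in> A" unfolding A_def using u by simp
      fix a b assume a: "a \<in> A" and b: "b \<in> Rprime p" and z: "(2*a - b) mod p \<in> Rprime p"
      have aR: "a \<in> Rprime p" and ua: "(u, a) \<in> (D_edges p)\<^sup>*" using a unfolding A_def by auto
      have "(a, b) \<in> D_edges p" by (rule edge[OF aR b z])
      then have "(u, b) \<in> (D_edges p)\<^sup>*" using ua by (rule rtrancl_into_rtrancl[rotated])
      then show "b \<in> A" unfolding A_def using b by blast
    qed
    then show "(u, v) \<in> (D_edges p)\<^sup>*" using v unfolding A_def by blast
  qed
qed

end
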